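(* Let $\Omega\subset\mathbb{R}^d$ be closed and convex with finite diameter, and let $\mathrm{Vars}$ be the Gaussian variation API with parameter $\alpha>0$. Then for any $z_1,z_2\in\Omega$, $$\mathbb{E}\Big[\min_{z\in\mathrm{Vars}(z_1)}\|z-z_2\|_2\Big]\le(1-\gamma)\|z_1-z_2\|_2+\alpha,\qquad\gamma=\frac{1}{8\pi[(\sqrt d+\log 2)^2+\log 2]},$$ where the expectation is over the randomness of $\mathrm{Vars}(z_1)$.
   Context: Gaussian variation API with parameter $\alpha>0$: $\mathrm{Vars}(z)=\{z\}\cup\{\Pi_\Omega(z+N^{k,l}):k\in\{1,2\},\ l\in\{1,\dots,\lceil\log_2(\operatorname{diam}(\Omega)/\alpha)\rceil\}\}$, where $\Pi_\Omega$ is the Euclidean projection onto $\Omega$ and $N^{k,l}\sim\mathcal{N}(0,\sigma_l^2I_d)$ are independent with $\sigma_l=\frac{\alpha2^{l-1}}{\sqrt\pi[(\sqrt d+\log 2)^2+\log 2]}$. *)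

theory Defs
  imports "HOL-Analysis.Analysis" "HOL-Probability.Probability"
begin

definition gaussian_iso :: "real \<Rightarrow> 'a::euclidean_space measure" where
  "gaussian_iso s = density lborel
     (\<lambda>x. ennreal ((2 * pi * s\<^sup>2) powr (- real DIM('a) / 2) * exp (- (norm x)\<^sup>2 / (2 * s\<^sup>2))))"

definition num_scales :: "'a::euclidean_space set \<Rightarrow> real \<Rightarrow> int" where
  "num_scales \<Omega> \<alpha> = \<lceil>log 2 (diameter \<Omega> / \<alpha>)\<rceil>"

definition var_index :: "'a::euclidean_space set \<Rightarrow> real \<Rightarrow> (nat \<times> nat) set" where
  "var_index \<Omega> \<alpha> = {1,2} \<times> {1..nat (num_scales \<Omega> \<alpha>)}"

definition gauss_const :: "nat \<Rightarrow> real" where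
  "gauss_const d = (sqrt (real d) + ln 2)\<^sup>2 + ln 2"

definition gauss_sigma :: "nat \<Rightarrow> real \<Rightarrow> nat \<Rightarrow> real" where
  "gauss_sigma d \<alpha> l = \<alpha> * 2 ^ (l - 1) / (sqrt pi * gauss_const d)"

definition noise_measure :: "'a::euclidean_space set \<Rightarrow> real \<Rightarrow> ((nat \<times> nat) \<Rightarrow> 'a) measure" where
  "noise_measure \<Omega> \<alpha> = PiM (var_index \<Omega> \<alpha>)
      (\<lambda>(k,l). gaussian_iso (gauss_sigma DIM('a) \<alpha> l))"

definition Vars :: "'a::euclidean_space set \<Rightarrow> real \<Rightarrow> 'a \<Rightarrow> ((nat \<times> nat) \<Rightarrow> 'a) \<Rightarrow> 'a set" where
  "Vars \<Omega> \<alpha> z N = insert z ((\<lambda>i. closest_point \<Omega> (z + N i)) ` var_index \<Omega> \<alpha>)"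

end

theory Submission
  imports Defs
begin



lemma norm_T_sq: "(norm (\<Sum>b\<in>(Basis::'a::euclidean_space set). f b *\<^sub>R b))\<^sup>2 = (\<Sum>b\<in>Basis. (f b)\<^sup>2)"
proof -
  have "(\<Sum>b\<in>(Basis::'a set). f b *\<^sub>R b) \<bullet> c = f c" if "c \<in> Basis" for c
    using that by simp
  have "(norm (\<Sum>b\<in>(Basis::'a set). f b *\<^sub>R b))\<^sup>2 = (\<Sum>b\<in>(Basis::'a set). f b *\<^sub>R b) \<bullet> (\<Sum>b\<in>(Basis::'a set). f b *\<^sub>R b)"
    by (simp add: power2_norm_eq_inner)
  also have "\<dots> = (\<Sum>c\<in>Basis. ((\<Sum>b\<in>(Basis::'a set). f b *\<^sub>R b) \<bullet> c) * ((\<Sum>b\<in>(Basis::'a set). f b *\<^sub>R b) \<bullet> c))"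
    by (rule euclidean_inner)
  also have "\<dots> = (\<Sum>b\<in>Basis. (f b)\<^sup>2)"
    by (simp add: power2_eq_square)
  finally show ?thesis .
qed

lemma inner_T: "(\<Sum>b\<in>(Basis::'a::euclidean_space set). f b *\<^sub>R b) \<bullet> u = (\<Sum>b\<in>Basis. f b * (u \<bullet> b))"
  by (subst euclidean_inner) (simp cong: sum.cong)

lemma powr_sqrt_pow: assumes "a > 0" shows "a powr (- real d / 2) = (1 / sqrt a) ^ d"
proof -
  have "(1 / sqrt a) ^ d = (a powr (-1/2)) ^ d"
    using assms by (simp add: powr_minus_divide powr_half_sqrt)
  also have "\<dots> = a powr (- real d / 2)"
    using assms by (simp add: powr_realpow[symmetric] powr_powr)
  finally show ?thesis by simp
qed

lemma gauss_prod:
  assumes s: "s > 0"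
  shows "(2 * pi * s\<^sup>2) powr (- real DIM('a::euclidean_space) / 2) * exp (- (norm (\<Sum>b\<in>(Basis::'a set). f b *\<^sub>R b))\<^sup>2 / (2 * s\<^sup>2))
     = (\<Prod>b\<in>Basis. normal_density 0 s (f b))"
proof -
  have "(\<Prod>b\<in>(Basis::'a set). normal_density 0 s (f b)) = (\<Prod>b\<in>(Basis::'a set). (1 / sqrt (2 * pi * s\<^sup>2)) * exp (- (f b)\<^sup>2 / (2 * s\<^sup>2)))"
    by (simp add: normal_density_def)
  also have "\<dots> = (1 / sqrt (2 * pi * s\<^sup>2)) ^ DIM('a) * exp (\<Sum>b\<in>(Basis::'a set). - (f b)\<^sup>2 / (2 * s\<^sup>2))"
    by (simp add: prod.distrib exp_sum prod_dividef power_one_over)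
  also have "(\<Sum>b\<in>(Basis::'a set). - (f b)\<^sup>2 / (2 * s\<^sup>2)) = - (\<Sum>b\<in>(Basis::'a set). (f b)\<^sup>2) / (2 * s\<^sup>2)"
    by (simp add: sum_divide_distrib sum_negf)
  moreover have "(2 * pi * s\<^sup>2) powr (- real DIM('a) / 2) = (1 / sqrt (2 * pi * s\<^sup>2)) ^ DIM('a)"
    using s by (intro powr_sqrt_pow) simp
  ultimately show ?thesis by (simp add: norm_T_sq)
qed



definition Nd :: "real \<Rightarrow> real measure" where
  "Nd s = density lborel (\<lambda>x. ennreal (normal_density 0 s x))"

lemma prob_space_Nd: "s > 0 \<Longrightarrow> prob_space (Nd s)"
  unfolding Nd_def by (rule prob_space_normal_density)

lemma sets_Nd[measurable_cong, simp]: "sets (Nd s) = sets borel"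
  by (simp add: Nd_def)

lemma space_Nd[simp]: "space (Nd s) = UNIV"
  by (simp add: Nd_def)

definition QQ :: "real \<Rightarrow> ('a::euclidean_space \<Rightarrow> real) measure" where
  "QQ s = PiM Basis (\<lambda>_. Nd s)"

lemma prob_space_QQ: "s > 0 \<Longrightarrow> prob_space (QQ s)"
  unfolding QQ_def by (intro prob_space_PiM prob_space_Nd)

lemma sets_QQ: "sets (QQ s :: ('a::euclidean_space \<Rightarrow> real) measure) = sets (PiM (Basis::'a set) (\<lambda>_. lborel))"
  unfolding QQ_def by (intro sets_PiM_cong) auto

lemma ind_PiE:
  assumes "f \<in> extensional I" "finite I"
  shows "indicator (PiE I A) f = (\<Prod>i\<in>I. indicator (A i) (f i) :: ennreal)"
proof (cases "f \<in> PiE I A")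
  case True then show ?thesis by (auto simp: PiE_iff indicator_def)
next
  case False
  then obtain i where "i \<in> I" "f i \<notin> A i" using assms by (auto simp: PiE_iff)
  then show ?thesis using False assms by (subst prod_zero) (auto simp: indicator_def intro!: bexI[of _ i])
qed

lemma QQ_density:
  assumes s: "s > 0"
  shows "(QQ s :: ('a::euclidean_space \<Rightarrow> real) measure) =
     density (PiM (Basis::'a set) (\<lambda>_. lborel)) (\<lambda>f. \<Prod>b\<in>Basis. ennreal (normal_density 0 s (f b)))"
proof -
  interpret product_prob_space "\<lambda>_::'a. Nd s"
    by (intro product_prob_spaceI prob_space_Nd s)
  show ?thesis unfolding QQ_def
  proof (rule PiM_eqI[symmetric])
    show "finite (Basis::'a set)" by simp
    show "sets (density (Pi\<^sub>M Basis (\<lambda>_. lborel)) (\<lambda>f. \<Prod>b\<in>Basis. ennreal (normal_density 0 s (f b)))) = sets (Pi\<^sub>M (Basis::'a set) (\<lambda>_. Nd s))"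
      by (simp only: sets_density) (intro sets_PiM_cong; simp)
    fix A :: "'a \<Rightarrow> real set" assume A: "\<And>i. i \<in> Basis \<Longrightarrow> A i \<in> sets (Nd s)"
    interpret L: product_sigma_finite "\<lambda>_::'a. lborel"
      by (simp add: product_sigma_finite_def sigma_finite_lborel)
    have meas: "(\<lambda>f. \<Prod>b\<in>Basis. ennreal (normal_density 0 s (f b))) \<in> borel_measurable (PiM Basis (\<lambda>_::'a. lborel))" by measurable
    have PE: "Pi\<^sub>E Basis A \<in> sets (PiM Basis (\<lambda>_::'a. lborel))" by (rule sets_PiM_I_finite) (use A in auto)
    have "emeasure (density (Pi\<^sub>M Basis (\<lambda>_. lborel)) (\<lambda>f. \<Prod>b\<in>Basis. ennreal (normal_density 0 s (f b)))) (Pi\<^sub>E Basis A)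
        = (\<integral>\<^sup>+ f. (\<Prod>b\<in>Basis. ennreal (normal_density 0 s (f b))) * indicator (Pi\<^sub>E Basis A) f \<partial>Pi\<^sub>M Basis (\<lambda>_. lborel))"
      by (rule emeasure_density[OF meas PE])
    also have "\<dots> = (\<integral>\<^sup>+ f. (\<Prod>b\<in>Basis. ennreal (normal_density 0 s (f b)) * indicator (A b) (f b)) \<partial>Pi\<^sub>M Basis (\<lambda>_. lborel))"
      by (intro nn_integral_cong) (simp add: ind_PiE prod.distrib[symmetric] space_PiM PiE_iff)
    also have "\<dots> = (\<Prod>b\<in>Basis. \<integral>\<^sup>+ x. ennreal (normal_density 0 s x) * indicator (A b) x \<partial>lborel)"
      using A by (subst L.product_nn_integral_prod) auto
    also have "\<dots> = (\<Prod>b\<in>Basis. emeasure (Nd s) (A b))"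
      using A by (intro prod.cong refl) (simp add: Nd_def emeasure_density)
    finally show "emeasure (density (Pi\<^sub>M Basis (\<lambda>_. lborel)) (\<lambda>f. \<Prod>b\<in>Basis. ennreal (normal_density 0 s (f b)))) (Pi\<^sub>E Basis A)
        = (\<Prod>b\<in>Basis. emeasure (Nd s) (A b))" .
  qed
qed


lemma gauss_eq:
  assumes s: "s > 0"
  shows "(gaussian_iso s :: 'a::euclidean_space measure) = distr (QQ s) borel (\<lambda>f. \<Sum>b\<in>(Basis::'a set). f b *\<^sub>R b)"
proof -
  let ?T = "\<lambda>f. \<Sum>b\<in>(Basis::'a set). f b *\<^sub>R b"
  let ?p = "\<lambda>x::'a. ennreal ((2 * pi * s\<^sup>2) powr (- real DIM('a) / 2) * exp (- (norm x)\<^sup>2 / (2 * s\<^sup>2)))"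
  have mT: "?T \<in> measurable (PiM (Basis::'a set) (\<lambda>_. lborel)) borel" by measurable
  have mp: "?p \<in> borel_measurable borel" by measurable
  have "(gaussian_iso s :: 'a measure) = density (distr (PiM (Basis::'a set) (\<lambda>_. lborel)) borel ?T) ?p"
    unfolding gaussian_iso_def by (subst lborel_eq[where 'a='a]) (rule refl)
  also have "\<dots> = distr (density (PiM (Basis::'a set) (\<lambda>_. lborel)) (\<lambda>f. ?p (?T f))) borel ?T"
    by (rule density_distr[OF mp mT])
  also have "density (PiM (Basis::'a set) (\<lambda>_. lborel)) (\<lambda>f. ?p (?T f)) = QQ s"
  proof -
    have "\<And>f. ?p (?T f) = (\<Prod>b\<in>Basis. ennreal (normal_density 0 s (f b)))"
      by (simp only: gauss_prod[OF s]) (simp add: prod_ennreal normal_density_nonneg)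
    then show ?thesis unfolding QQ_density[OF s] by simp
  qed
  finally show ?thesis .
qed


lemma meas_QQ: "f \<in> measurable (PiM (Basis::'a::euclidean_space set) (\<lambda>_. lborel)) N \<Longrightarrow> f \<in> measurable (QQ s :: ('a \<Rightarrow> real) measure) N"
  using measurable_cong_sets[OF sets_QQ refl] by blast

lemma T_meas_QQ: "(\<lambda>f. \<Sum>b\<in>(Basis::'a::euclidean_space set). f b *\<^sub>R b) \<in> borel_measurable (QQ s)"
  by (rule meas_QQ) measurable

lemma prob_space_gauss: "s > 0 \<Longrightarrow> prob_space (gaussian_iso s :: 'a::euclidean_space measure)"
  by (subst gauss_eq) (auto intro!: prob_space.prob_space_distr prob_space_QQ T_meas_QQ)

lemma QQ_component:
  assumes s: "s > 0" and b: "b \<in> (Basis::'a::euclidean_space set)" and g: "g \<in> borel_measurable borel"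
  shows "(\<integral>\<^sup>+f. g (f b) \<partial>(QQ s :: ('a \<Rightarrow> real) measure)) = (\<integral>\<^sup>+x. g x \<partial>Nd s)"
proof -
  have "distr (QQ s :: ('a \<Rightarrow> real) measure) (Nd s) (\<lambda>f. f b) = Nd s"
    unfolding QQ_def by (rule distr_PiM_component[OF prob_space_Nd[OF s] b])
  then have "(\<integral>\<^sup>+x. g x \<partial>Nd s) = (\<integral>\<^sup>+x. g x \<partial>distr (QQ s :: ('a \<Rightarrow> real) measure) (Nd s) (\<lambda>f. f b))"
    by simp
  also have "\<dots> = (\<integral>\<^sup>+f. g (f b) \<partial>(QQ s :: ('a \<Rightarrow> real) measure))"
    using g b by (subst nn_integral_distr) (auto simp: QQ_def)
  finally show ?thesis by simp
qed

lemma Nd_moment2: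
  assumes s: "s > 0"
  shows "(\<integral>\<^sup>+x. ennreal (x\<^sup>2) \<partial>Nd s) = ennreal (s\<^sup>2)"
proof -
  have "(\<integral>\<^sup>+x. ennreal (x\<^sup>2) \<partial>Nd s) = (\<integral>\<^sup>+x. ennreal (normal_density 0 s x * (x - 0)^(2*1)) \<partial>lborel)"
    unfolding Nd_def by (subst nn_integral_density) (auto simp: ennreal_mult'[symmetric] normal_density_nonneg)
  also have "\<dots> = ennreal (\<integral>x. normal_density 0 s x * (x - 0)^(2*1) \<partial>lborel)"
    using s by (intro nn_integral_eq_integral integrable_normal_moment) (auto simp: normal_density_nonneg)
  also have "(\<integral>x. normal_density 0 s x * (x - 0)^(2*1) \<partial>lborel) = s\<^sup>2"
    using s by (subst integral_normal_moment_even) (auto simp: power2_eq_square)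
  finally show ?thesis .
qed

lemma gauss_norm2:
  assumes s: "s > 0"
  shows "(\<integral>\<^sup>+x. ennreal ((norm x)\<^sup>2) \<partial>(gaussian_iso s :: 'a::euclidean_space measure)) = ennreal (real DIM('a) * s\<^sup>2)"
proof -
  let ?T = "\<lambda>f. \<Sum>b\<in>(Basis::'a set). f b *\<^sub>R b"
  have mT: "?T \<in> measurable (QQ s :: ('a \<Rightarrow> real) measure) borel"
    by (rule T_meas_QQ)
  have "(\<integral>\<^sup>+x. ennreal ((norm x)\<^sup>2) \<partial>(gaussian_iso s :: 'a measure)) = (\<integral>\<^sup>+f. ennreal ((norm (?T f))\<^sup>2) \<partial>(QQ s :: ('a \<Rightarrow> real) measure))"
    by (subst gauss_eq[OF s], subst nn_integral_distr[OF mT]) auto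
  also have "\<dots> = (\<integral>\<^sup>+f. (\<Sum>b\<in>(Basis::'a set). ennreal ((f b)\<^sup>2)) \<partial>(QQ s :: ('a \<Rightarrow> real) measure))"
    by (intro nn_integral_cong) (simp add: norm_T_sq sum_ennreal)
  also have "\<dots> = (\<Sum>b\<in>(Basis::'a set). \<integral>\<^sup>+f. ennreal ((f b)\<^sup>2) \<partial>(QQ s :: ('a \<Rightarrow> real) measure))"
    by (rule nn_integral_sum) (auto simp: QQ_def)
  also have "\<dots> = (\<Sum>b\<in>(Basis::'a set). ennreal (s\<^sup>2))"
    by (intro sum.cong refl) (simp add: QQ_component[OF s, where g="\<lambda>x. ennreal (x\<^sup>2)"] Nd_moment2[OF s])
  also have "\<dots> = ennreal (real DIM('a) * s\<^sup>2)"
    by (simp add: ennreal_mult ennreal_of_nat_eq_real_of_nat)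
  finally show ?thesis .
qed

lemma indep_QQ:
  assumes s: "s > 0"
  shows "prob_space.indep_vars (QQ s :: ('a::euclidean_space \<Rightarrow> real) measure) (\<lambda>_. borel) (\<lambda>b f. f b) Basis"
proof -
  interpret P: prob_space "QQ s :: ('a \<Rightarrow> real) measure" by (rule prob_space_QQ[OF s])
  show ?thesis
  proof (subst P.indep_vars_iff_distr_eq_PiM')
    show "(Basis::'a set) \<noteq> {}" by simp
    show "(\<lambda>f::'a\<Rightarrow>real. f i) \<in> measurable (QQ s) (borel :: real measure)" if "i \<in> (Basis::'a set)" for i
    proof -
      have "(\<lambda>f::'a\<Rightarrow>real. f i) \<in> measurable (PiM (Basis::'a set) (\<lambda>_. lborel)) lborel"
        by (rule measurable_component_singleton[OF that])
      then have "(\<lambda>f::'a\<Rightarrow>real. f i) \<in> measurable (PiM (Basis::'a set) (\<lambda>_. lborel)) borel"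
        by (simp only: measurable_lborel1)
      then show ?thesis by (rule meas_QQ)
    qed
    have 1: "distr (QQ s :: ('a \<Rightarrow> real) measure) (PiM Basis (\<lambda>_. borel)) (\<lambda>x. \<lambda>i\<in>Basis. x i) = distr (QQ s) (QQ s) (\<lambda>x. x)"
      by (intro distr_cong refl) (auto simp: sets_QQ QQ_def space_PiM PiE_iff extensional_restrict intro!: sets_PiM_cong)
    have 2: "PiM Basis (\<lambda>i. distr (QQ s :: ('a \<Rightarrow> real) measure) borel (\<lambda>f. f i)) = QQ s"
      unfolding QQ_def
    proof (intro PiM_cong refl)
      fix i :: 'a assume i: "i \<in> Basis"
      have "distr (PiM Basis (\<lambda>_. Nd s)) borel (\<lambda>f. f i) = distr (PiM Basis (\<lambda>_. Nd s)) (Nd s) (\<lambda>f. f i)"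
        by (intro distr_cong) auto
      also have "\<dots> = Nd s" by (rule distr_PiM_component[OF prob_space_Nd[OF s] i])
      finally show "distr (PiM Basis (\<lambda>_. Nd s)) borel (\<lambda>f. f i) = Nd s" .
    qed
    show "distr (QQ s :: ('a \<Rightarrow> real) measure) (PiM Basis (\<lambda>_. borel)) (\<lambda>x. \<lambda>i\<in>Basis. x i) = PiM Basis (\<lambda>i. distr (QQ s) borel (\<lambda>f. f i))"
      unfolding 1 2 by (simp add: distr_id)
  qed
qed


lemma half_moment:
  assumes s: "s > 0"
  shows "(\<integral>\<^sup>+x. ennreal (normal_density 0 s x) * ennreal (max 0 x) \<partial>lborel) = ennreal (s / sqrt (2 * pi))"
proof -
  have i1: "integrable lborel (\<lambda>x. normal_density 0 s x * \<bar>x - 0\<bar>^(2*0+1))"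
    using s by (rule integrable_normal_moment_abs)
  have i2: "integrable lborel (\<lambda>x. normal_density 0 s x * x)"
    using s by (rule integrable_normal_moment_nz_1)
  have eq: "(\<lambda>x. normal_density 0 s x * max 0 x) = (\<lambda>x. (normal_density 0 s x * \<bar>x - 0\<bar>^(2*0+1) + normal_density 0 s x * x) / 2)"
    by (auto simp: max_def fun_eq_iff field_simps)
  have int: "integrable lborel (\<lambda>x. normal_density 0 s x * max 0 x)"
    unfolding eq by (intro integrable_divide Bochner_Integration.integrable_add i1 i2)
  have "(\<integral>\<^sup>+x. ennreal (normal_density 0 s x) * ennreal (max 0 x) \<partial>lborel) = (\<integral>\<^sup>+x. ennreal (normal_density 0 s x * max 0 x) \<partial>lborel)"
    by (intro nn_integral_cong) (simp add: ennreal_mult normal_density_nonneg)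
  also have "\<dots> = ennreal (\<integral>x. normal_density 0 s x * max 0 x \<partial>lborel)"
    using int by (intro nn_integral_eq_integral) (auto simp: normal_density_nonneg)
  also have "(\<integral>x. normal_density 0 s x * max 0 x \<partial>lborel) = (s * sqrt (2 / pi) + 0) / 2"
    unfolding eq using s i1 i2
    by (simp add: integral_add integral_normal_moment_nz_1 integral_normal_moment_abs_odd[of s 0 0, simplified])
  also have "(s * sqrt (2 / pi) + 0) / 2 = s / sqrt (2 * pi)"
  proof -
    have "sqrt (2 / pi) / 2 = 1 / sqrt (2 * pi)"
      by (simp add: real_sqrt_divide real_sqrt_mult field_simps)
    then show ?thesis by (simp add: field_simps)
  qed
  finally show ?thesis .
qed


lemma gauss_halfmoment:
  assumes s: "s > 0" and u: "u \<noteq> 0"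
  shows "(\<integral>\<^sup>+x. ennreal (max 0 (x \<bullet> u)) \<partial>(gaussian_iso s :: 'a::euclidean_space measure)) = ennreal (s * norm u / sqrt (2 * pi))"
proof -
  interpret P: prob_space "QQ s :: ('a \<Rightarrow> real) measure" by (rule prob_space_QQ[OF s])
  define I where "I = {b\<in>(Basis::'a set). u \<bullet> b \<noteq> 0}"
  have I: "finite I" "I \<subseteq> Basis" by (auto simp: I_def)
  have Ine: "I \<noteq> {}"
  proof -
    obtain b where "b \<in> Basis" "u \<bullet> b \<noteq> 0" using u by (metis euclidean_all_zero_iff)
    then show ?thesis by (auto simp: I_def)
  qed
  let ?T = "\<lambda>f. \<Sum>b\<in>(Basis::'a set). f b *\<^sub>R b"
  let ?X = "\<lambda>b f. (u \<bullet> b) * f b"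
  have sumI: "?T f \<bullet> u = (\<Sum>b\<in>I. ?X b f)" for f
    unfolding inner_T I_def
    by (rule sum.mono_neutral_cong_right) (auto simp: mult.commute)
  have ind0: "P.indep_vars (\<lambda>_. borel) (\<lambda>b f. f b) Basis"
    by (rule indep_QQ[OF s])
  have ind: "P.indep_vars (\<lambda>_. borel) ?X I"
    using P.indep_vars_compose2[OF ind0, of "\<lambda>b x. (u \<bullet> b) * x" "\<lambda>_. borel"]
    by (intro P.indep_vars_subset[OF _ I(2)]) auto
  have distb: "distributed (QQ s) lborel (\<lambda>f. f b) (normal_density 0 s)" if b: "b \<in> Basis" for b :: 'a
  proof -
    have "distr (QQ s) lborel (\<lambda>f::'a\<Rightarrow>real. f b) = distr (QQ s) (Nd s) (\<lambda>f. f b)"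
      by (intro distr_cong) auto
    also have "\<dots> = Nd s" unfolding QQ_def by (rule distr_PiM_component[OF prob_space_Nd[OF s] b])
    finally show ?thesis
      unfolding distributed_def Nd_def
      using b by (auto intro!: meas_QQ)
  qed
  have distX: "distributed (QQ s) lborel (?X b) (normal_density 0 (\<bar>u \<bullet> b\<bar> * s))" if b: "b \<in> I" for b
    using P.normal_density_affine[OF distb[of b] s, of "u \<bullet> b" 0] b by (auto simp: I_def)
  have dist: "distributed (QQ s) lborel (\<lambda>f. \<Sum>b\<in>I. ?X b f) (normal_density (\<Sum>b\<in>I. 0) (sqrt (\<Sum>b\<in>I. (\<bar>u \<bullet> b\<bar> * s)\<^sup>2)))"
    by (rule P.sum_indep_normal[OF I(1) Ine ind]) (use distX s in \<open>auto simp: I_def\<close>)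
  have "(\<Sum>b\<in>I. (\<bar>u \<bullet> b\<bar> * s)\<^sup>2) = s\<^sup>2 * (\<Sum>b\<in>(Basis::'a set). (u \<bullet> b)\<^sup>2)"
    unfolding I_def sum_distrib_left
    by (rule sum.mono_neutral_cong_left) (auto simp: power_mult_distrib)
  also have "(\<Sum>b\<in>(Basis::'a set). (u \<bullet> b)\<^sup>2) = (norm u)\<^sup>2"
  proof -
    have "(norm u)\<^sup>2 = u \<bullet> u" by (rule power2_norm_eq_inner)
    also have "\<dots> = (\<Sum>b\<in>(Basis::'a set). (u \<bullet> b) * (u \<bullet> b))" by (rule euclidean_inner)
    finally show ?thesis by (simp add: power2_eq_square)
  qed
  finally have sq: "sqrt (\<Sum>b\<in>I. (\<bar>u \<bullet> b\<bar> * s)\<^sup>2) = s * norm u"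
    using s by (simp add: real_sqrt_mult)
  have dist': "distributed (QQ s) lborel (\<lambda>f. ?T f \<bullet> u) (normal_density 0 (s * norm u))"
    using dist unfolding sq sumI by simp
  have "(\<integral>\<^sup>+x. ennreal (max 0 (x \<bullet> u)) \<partial>(gaussian_iso s :: 'a measure)) = (\<integral>\<^sup>+f. ennreal (max 0 (?T f \<bullet> u)) \<partial>(QQ s :: ('a \<Rightarrow> real) measure))"
    by (subst gauss_eq[OF s], subst nn_integral_distr[OF T_meas_QQ]) auto
  also have "\<dots> = (\<integral>\<^sup>+x. ennreal (normal_density 0 (s * norm u) x) * ennreal (max 0 x) \<partial>lborel)"
    by (rule distributed_nn_integral[OF dist', symmetric]) measurable
  also have "\<dots> = ennreal (s * norm u / sqrt (2 * pi))"
    using s u by (intro half_moment) simp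
  finally show ?thesis .
qed

lemma pointwise:
  fixes x u :: "'a::euclidean_space"
  assumes r: "norm u = r" "r > 0"
  shows "min r (norm (x - u)) + max 0 (x \<bullet> (u /\<^sub>R r)) \<le> r + (norm x)\<^sup>2 / (2*r)"
proof (cases "x \<bullet> u > 0")
  case False
  then have "x \<bullet> (u /\<^sub>R r) \<le> 0" using r by (simp add: mult_nonneg_nonpos)
  then show ?thesis using r by (auto simp: max_def min_def intro: add_increasing2)
next
  case True
  have n2: "(norm (x - u))\<^sup>2 = (norm x)\<^sup>2 - 2 * (x \<bullet> u) + r\<^sup>2"
  proof -
    have uu: "u \<bullet> u = r\<^sup>2" using r(1) by (metis power2_norm_eq_inner)
    show ?thesis using uu by (simp add: power2_norm_eq_inner inner_diff_left inner_diff_right inner_commute)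
  qed
  have "norm (x - u) \<le> ((norm (x - u))\<^sup>2 + r\<^sup>2) / (2 * r)"
  proof -
    have "0 \<le> (norm (x - u) - r)\<^sup>2" by simp
    then have "2 * r * norm (x - u) \<le> (norm (x - u))\<^sup>2 + r\<^sup>2" by (simp add: power2_diff mult.commute mult.left_commute)
    then show ?thesis using r by (simp add: field_simps)
  qed
  also have "\<dots> = r + (norm x)\<^sup>2 / (2*r) - (x \<bullet> u) / r"
    using r unfolding n2 by (simp add: field_simps power2_eq_square)
  finally have "min r (norm (x - u)) \<le> r + (norm x)\<^sup>2 / (2*r) - (x \<bullet> u) / r" by linarith
  moreover have "max 0 (x \<bullet> (u /\<^sub>R r)) = (x \<bullet> u) / r"
    using True r by (simp add: max_def divide_simps)
  ultimately show ?thesis by linarith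
qed

lemma arith_final:
  fixes d c r s \<sigma> :: real
  assumes d: "0 < d" "d \<le> c" and r: "0 < r" and s: "1/4 \<le> s" "s \<le> 1/2"
    and \<sigma>: "\<sigma> = s * r / (sqrt pi * c)"
  shows "r + d * \<sigma>\<^sup>2 / (2*r) - \<sigma> / sqrt (2*pi) \<le> (1 - 1/(8*pi*c)) * r"
proof -
  have c: "c > 0" using d by linarith
  have sp: "sqrt pi > 0" by simp
  have spi2: "(sqrt pi)\<^sup>2 = pi" by simp
  have s2: "sqrt 2 \<ge> 1.4"
    by (rule real_le_rsqrt) (simp add: power2_eq_square)
  have eq1: "d * \<sigma>\<^sup>2 / (2*r) = (d / c) * s\<^sup>2 * r / (2 * pi * c)"
    using c r sp unfolding \<sigma> by (simp add: field_simps power2_eq_square)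
  have eq2: "\<sigma> / sqrt (2*pi) = s * r / (sqrt 2 * pi * c)"
    using c r sp unfolding \<sigma> by (simp add: real_sqrt_mult field_simps)
  have dc: "d / c \<le> 1" using d c by simp
  have q: "4 * (d/c) * s\<^sup>2 - 4 * sqrt 2 * s + 1 \<le> 0"
  proof -
    have "4 * (d/c) * s\<^sup>2 \<le> 4 * s\<^sup>2" using dc by (intro mult_right_mono) auto
    moreover have "4 * s\<^sup>2 - 4 * sqrt 2 * s + 1 \<le> 0"
    proof -
      have "(s - 1/4) * (s - 1/2) \<le> 0" using s by (intro mult_nonneg_nonpos) auto
      then have "s\<^sup>2 \<le> 3/4 * s - 1/8" by (simp add: algebra_simps power2_eq_square)
      moreover have "sqrt 2 * s \<ge> 1.4 * s" using s2 s by (intro mult_right_mono) auto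
      ultimately show ?thesis using s by linarith
    qed
    ultimately show ?thesis by linarith
  qed
  have "d * \<sigma>\<^sup>2 / (2*r) - \<sigma> / sqrt (2*pi) = r / (8 * pi * c) * (4 * (d/c) * s\<^sup>2 - 4 * sqrt 2 * s)"
    unfolding eq1 eq2 using c r by (simp add: field_simps power2_eq_square)
  also have "\<dots> \<le> r / (8 * pi * c) * (-1)"
    using q c r by (intro mult_left_mono) auto
  finally show ?thesis by (simp add: algebra_simps)
qed

lemma key:
  fixes u :: "'a::euclidean_space"
  assumes s: "\<sigma> > 0" and u: "u \<noteq> 0"
  shows "(\<integral>\<^sup>+x. ennreal (min (norm u) (norm (x - u))) \<partial>(gaussian_iso \<sigma> :: 'a measure))
     \<le> ennreal (norm u + real DIM('a) * \<sigma>\<^sup>2 / (2 * norm u) - \<sigma> / sqrt (2*pi))"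
proof -
  define r where "r = norm u"
  have r: "r > 0" using u by (simp add: r_def)
  interpret G: prob_space "gaussian_iso \<sigma> :: 'a measure" by (rule prob_space_gauss[OF s])
  have sp[simp]: "space (gaussian_iso \<sigma> :: 'a measure) = UNIV" by (simp add: gaussian_iso_def)
  have sets[measurable_cong]: "sets (gaussian_iso \<sigma> :: 'a measure) = sets borel" by (simp add: gaussian_iso_def)
  define v where "v = u /\<^sub>R r"
  have nv: "norm v = 1" using r by (simp add: v_def r_def)
  have hm: "(\<integral>\<^sup>+x. ennreal (max 0 (x \<bullet> v)) \<partial>(gaussian_iso \<sigma> :: 'a measure)) = ennreal (\<sigma> / sqrt (2*pi))"
  proof -
    have "v \<noteq> 0" using nv by auto
    then show ?thesis using gauss_halfmoment[OF s, of v] nv by simp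
  qed
  have "(\<integral>\<^sup>+x. ennreal (min r (norm (x - u))) \<partial>(gaussian_iso \<sigma> :: 'a measure)) + ennreal (\<sigma> / sqrt (2*pi))
      = (\<integral>\<^sup>+x. ennreal (min r (norm (x - u))) + ennreal (max 0 (x \<bullet> v)) \<partial>(gaussian_iso \<sigma> :: 'a measure))"
    unfolding hm[symmetric] by (rule nn_integral_add[symmetric]) auto
  also have "\<dots> \<le> (\<integral>\<^sup>+x. ennreal r + ennreal (1 / (2 * r)) * ennreal ((norm x)\<^sup>2) \<partial>(gaussian_iso \<sigma> :: 'a measure))"
  proof (intro nn_integral_mono)
    fix x :: 'a
    have "min r (norm (x - u)) + max 0 (x \<bullet> v) \<le> r + (norm x)\<^sup>2 / (2*r)"
      using pointwise[of u r x] r unfolding v_def r_def by simp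
    then have "ennreal (min r (norm (x - u)) + max 0 (x \<bullet> v)) \<le> ennreal (r + 1 / (2 * r) * (norm x)\<^sup>2)"
      by (intro ennreal_leI) simp
    moreover have "ennreal (min r (norm (x - u)) + max 0 (x \<bullet> v)) = ennreal (min r (norm (x - u))) + ennreal (max 0 (x \<bullet> v))"
      using r by (intro ennreal_plus) auto
    moreover have "ennreal (r + 1 / (2 * r) * (norm x)\<^sup>2) = ennreal r + ennreal (1 / (2 * r)) * ennreal ((norm x)\<^sup>2)"
      using r by (subst ennreal_plus) (auto simp: ennreal_mult[symmetric])
    ultimately show "ennreal (min r (norm (x - u))) + ennreal (max 0 (x \<bullet> v)) \<le> ennreal r + ennreal (1 / (2 * r)) * ennreal ((norm x)\<^sup>2)"
      by simp
  qed
  also have "\<dots> = ennreal r + ennreal (1 / (2 * r)) * (\<integral>\<^sup>+x. ennreal ((norm x)\<^sup>2) \<partial>(gaussian_iso \<sigma> :: 'a measure))"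
    using G.emeasure_space_1 by (subst nn_integral_add) (auto simp: nn_integral_cmult)
  also have "\<dots> = ennreal (r + real DIM('a) * \<sigma>\<^sup>2 / (2 * r))"
    using r by (simp add: gauss_norm2[OF s] ennreal_mult[symmetric] ennreal_plus[symmetric] del: ennreal_plus)
  finally have le: "(\<integral>\<^sup>+x. ennreal (min r (norm (x - u))) \<partial>(gaussian_iso \<sigma> :: 'a measure)) + ennreal (\<sigma> / sqrt (2*pi))
      \<le> ennreal (r + real DIM('a) * \<sigma>\<^sup>2 / (2 * r))" .
  have "(\<integral>\<^sup>+x. ennreal (min r (norm (x - u))) \<partial>(gaussian_iso \<sigma> :: 'a measure))
      = (\<integral>\<^sup>+x. ennreal (min r (norm (x - u))) \<partial>(gaussian_iso \<sigma> :: 'a measure)) + ennreal (\<sigma> / sqrt (2*pi)) - ennreal (\<sigma> / sqrt (2*pi))"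
    by simp
  also have "\<dots> \<le> ennreal (r + real DIM('a) * \<sigma>\<^sup>2 / (2 * r)) - ennreal (\<sigma> / sqrt (2*pi))"
    using le by (intro ennreal_minus_mono) auto
  also have "\<dots> = ennreal (r + real DIM('a) * \<sigma>\<^sup>2 / (2 * r) - \<sigma> / sqrt (2*pi))"
    using s by (intro ennreal_minus) simp
  finally show ?thesis unfolding r_def .
qed

lemma exists_scale:
  fixes q Q :: real
  assumes q: "q \<ge> 2" "q \<le> Q"
  shows "\<exists>l::nat. 1 \<le> l \<and> int l \<le> \<lceil>log 2 Q\<rceil> \<and> q / 2 < 2 ^ l \<and> 2 ^ l \<le> q"
proof -
  define l where "l = nat \<lfloor>log 2 q\<rfloor>"
  have lg1: "log 2 q \<ge> 1" using q by (simp add: le_log_iff)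
  then have fl: "\<lfloor>log 2 q\<rfloor> \<ge> 1" by (simp add: le_floor_iff)
  then have lreal: "real l = \<lfloor>log 2 q\<rfloor>" by (simp add: l_def)
  have "1 \<le> l" using fl unfolding l_def by (simp add: le_nat_iff)
  moreover have "int l \<le> \<lceil>log 2 Q\<rceil>"
  proof -
    have "log 2 q \<le> log 2 Q" using q by simp
    then have "\<lfloor>log 2 q\<rfloor> \<le> \<lceil>log 2 Q\<rceil>" by linarith
    then show ?thesis using fl by (simp add: l_def)
  qed
  moreover have "(2::real) ^ l \<le> q"
  proof -
    have "(2::real) ^ l = 2 powr (real l)" by (simp add: powr_realpow)
    also have "\<dots> \<le> 2 powr (log 2 q)" using lreal by (intro powr_mono) linarith+
    also have "\<dots> = q" using q by simp
    finally show ?thesis .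
  qed
  moreover have "q / 2 < 2 ^ l"
  proof -
    have "q = 2 powr (log 2 q)" using q by simp
    also have "\<dots> < 2 powr (real l + 1)" using lreal by (intro powr_less_mono) linarith+
    also have "\<dots> = 2 * 2 ^ l" by (simp add: powr_add powr_realpow)
    finally show ?thesis by simp
  qed
  ultimately show ?thesis by blast
qed


lemma gauss_const_ge: "gauss_const d \<ge> real d"
proof -
  have "real d = (sqrt (real d))\<^sup>2" by simp
  also have "\<dots> \<le> (sqrt (real d) + ln 2)\<^sup>2" by (intro power_mono) auto
  moreover have "ln (2::real) \<ge> 0" by simp
  ultimately show ?thesis unfolding gauss_const_def by linarith
qed

lemma gauss_const_pos: "gauss_const d > 0"
  unfolding gauss_const_def by (intro add_nonneg_pos) auto

lemma gauss_sigma_pos: "\<alpha> > 0 \<Longrightarrow> gauss_sigma d \<alpha> l > 0"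
  unfolding gauss_sigma_def using gauss_const_pos[of d] by simp

theorem mainTheorem5:
  fixes \<Omega> :: "'a::euclidean_space set" and \<alpha> :: real and z1 z2 :: 'a
  assumes "closed \<Omega>" and "convex \<Omega>" and "bounded \<Omega>"
    and "\<alpha> > 0" and "z1 \<in> \<Omega>" and "z2 \<in> \<Omega>"
  shows "(\<integral>\<^sup>+ N. ennreal (Min ((\<lambda>z. norm (z - z2)) ` Vars \<Omega> \<alpha> z1 N)) \<partial>noise_measure \<Omega> \<alpha>)
           \<le> ennreal ((1 - 1 / (8 * pi * gauss_const DIM('a))) * norm (z1 - z2) + \<alpha>)"
proof -
  note cl = assms(1) and cv = assms(2) and bd = assms(3) and a = assms(4) and z1 = assms(5) and z2 = assms(6)
  define c where "c = gauss_const DIM('a)"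
  define r where "r = norm (z1 - z2)"
  define F where "F N = Min ((\<lambda>z. norm (z - z2)) ` Vars \<Omega> \<alpha> z1 N)" for N
  have c: "c \<ge> real DIM('a)" "c > 0" using gauss_const_ge gauss_const_pos by (auto simp: c_def)
  have c1: "c \<ge> 1" using c(1) DIM_positive[where 'a='a] by linarith
  have r0: "r \<ge> 0" by (simp add: r_def)
  have fin: "finite (var_index \<Omega> \<alpha>)" by (simp add: var_index_def)
  have finV: "finite (Vars \<Omega> \<alpha> z1 N)" for N using fin by (simp add: Vars_def)
  have Fle: "F N \<le> norm (z - z2)" if "z \<in> Vars \<Omega> \<alpha> z1 N" for z N
    unfolding F_def using finV that by (intro Min_le) auto
  have Fr: "F N \<le> r" for N using Fle[of z1 N] by (simp add: r_def Vars_def)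
  have psM: "prob_space (noise_measure \<Omega> \<alpha>)"
    unfolding noise_measure_def
    by (intro prob_space_PiM) (auto intro!: prob_space_gauss gauss_sigma_pos a)
  interpret M: prob_space "noise_measure \<Omega> \<alpha>" by (rule psM)
  show ?thesis
  proof (cases "r / (8 * pi * c) \<le> \<alpha>")
    case True
    have "(\<integral>\<^sup>+ N. ennreal (F N) \<partial>noise_measure \<Omega> \<alpha>) \<le> (\<integral>\<^sup>+ N. ennreal r \<partial>noise_measure \<Omega> \<alpha>)"
      by (intro nn_integral_mono ennreal_leI Fr)
    also have "\<dots> = ennreal r" by (simp add: M.emeasure_space_1)
    also have "\<dots> \<le> ennreal ((1 - 1 / (8 * pi * c)) * r + \<alpha>)"
      using True by (intro ennreal_leI) (simp add: algebra_simps)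
    finally show ?thesis unfolding F_def c_def r_def .
  next
    case False
    then have rbig: "r > 8 * pi * c * \<alpha>" using c a by (simp add: field_simps)
    have rpos: "r > 0" using rbig c a by (smt (verit) mult_pos_pos pi_gt3)
    define q where "q = r / \<alpha>"
    have q2: "q \<ge> 2"
    proof -
      have "pi * c \<ge> 3 * 1" using pi_gt3 c1 by (intro mult_mono) auto
      then have "8 * pi * c \<ge> 2" by linarith
      then have "8 * pi * c * \<alpha> \<ge> 2 * \<alpha>" using a by (intro mult_right_mono) auto
      then have "2 * \<alpha> \<le> r" using rbig by linarith
      then show ?thesis using a by (simp add: q_def le_divide_eq)
    qed
    have rD: "r \<le> diameter \<Omega>" unfolding r_def using diameter_bounded_bound[OF bd z1 z2] by (simp add: dist_norm)
    have qQ: "q \<le> diameter \<Omega> / \<alpha>" using rD a by (simp add: q_def divide_right_mono)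
    obtain l :: nat where l: "1 \<le> l" "int l \<le> \<lceil>log 2 (diameter \<Omega> / \<alpha>)\<rceil>" "q / 2 < 2 ^ l" "2 ^ l \<le> q"
      using exists_scale[OF q2 qQ] by blast
    define idx where "idx = (1::nat, l)"
    have idx: "idx \<in> var_index \<Omega> \<alpha>"
      using l unfolding idx_def var_index_def num_scales_def by auto
    define \<sigma> where "\<sigma> = gauss_sigma DIM('a) \<alpha> l"
    have \<sigma>pos: "\<sigma> > 0" unfolding \<sigma>_def using a by (rule gauss_sigma_pos)
    define s where "s = \<alpha> * 2 ^ (l - 1) / r"
    have pl: "(2::real) ^ l = 2 * 2 ^ (l - 1)" using l(1) by (simp add: power_eq_if)
    have s14: "1/4 \<le> s" and s12: "s \<le> 1/2"
      using l(3,4) rpos a unfolding s_def q_def pl by (simp_all add: field_simps)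
    have \<sigma>s: "\<sigma> = s * r / (sqrt pi * c)"
      using rpos unfolding \<sigma>_def s_def gauss_sigma_def c_def by simp
    define u where "u = z2 - z1"
    have u: "u \<noteq> 0" "norm u = r" using rpos by (auto simp: u_def r_def norm_minus_commute)
    have Fmin: "F N \<le> min r (norm (N idx - u))" for N
    proof -
      have "closest_point \<Omega> (z1 + N idx) \<in> Vars \<Omega> \<alpha> z1 N" using idx by (auto simp: Vars_def)
      then have "F N \<le> norm (closest_point \<Omega> (z1 + N idx) - z2)" by (rule Fle)
      also have "\<dots> = dist (closest_point \<Omega> (z1 + N idx)) (closest_point \<Omega> z2)"
        using z2 by (simp add: closest_point_self dist_norm)
      also have "\<dots> \<le> dist (z1 + N idx) z2"
        using cv cl z2 by (intro closest_point_lipschitz) auto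
      also have "\<dots> = norm (N idx - u)" by (simp add: dist_norm u_def algebra_simps)
      finally show ?thesis using Fr by simp
    qed
    have comp: "distr (noise_measure \<Omega> \<alpha>) (gaussian_iso \<sigma>) (\<lambda>N. N idx) = (gaussian_iso \<sigma> :: 'a measure)"
    proof -
      have "distr (noise_measure \<Omega> \<alpha>) ((\<lambda>(k,l). gaussian_iso (gauss_sigma DIM('a) \<alpha> l)) idx) (\<lambda>N. N idx)
          = ((\<lambda>(k,l). gaussian_iso (gauss_sigma DIM('a) \<alpha> l)) idx :: 'a measure)"
        unfolding noise_measure_def
        by (rule distr_PiM_component[OF _ idx]) (auto intro!: prob_space_gauss gauss_sigma_pos a)
      then show ?thesis by (simp add: idx_def \<sigma>_def)
    qed
    have "(\<integral>\<^sup>+ N. ennreal (F N) \<partial>noise_measure \<Omega> \<alpha>) \<le> (\<integral>\<^sup>+ N. ennreal (min r (norm (N idx - u))) \<partial>noise_measure \<Omega> \<alpha>)"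
      by (intro nn_integral_mono ennreal_leI Fmin)
    also have "\<dots> = (\<integral>\<^sup>+ x. ennreal (min r (norm (x - u))) \<partial>distr (noise_measure \<Omega> \<alpha>) (gaussian_iso \<sigma>) (\<lambda>N. N idx))"
    proof -
      have "(\<lambda>N. N idx) \<in> measurable (noise_measure \<Omega> \<alpha>) ((\<lambda>(k,l). gaussian_iso (gauss_sigma DIM('a) \<alpha> l)) idx :: 'a measure)"
        unfolding noise_measure_def by (rule measurable_component_singleton[OF idx])
      then have mT: "(\<lambda>N. N idx) \<in> measurable (noise_measure \<Omega> \<alpha>) (gaussian_iso \<sigma> :: 'a measure)"
        by (simp add: idx_def \<sigma>_def)
      have sg: "sets (gaussian_iso \<sigma> :: 'a measure) = sets borel" by (simp add: gaussian_iso_def)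
      have mb: "(\<lambda>x::'a. ennreal (min r (norm (x - u)))) \<in> borel_measurable borel" by measurable
      have mf: "(\<lambda>x::'a. ennreal (min r (norm (x - u)))) \<in> borel_measurable (distr (noise_measure \<Omega> \<alpha>) (gaussian_iso \<sigma>) (\<lambda>N. N idx))"
        unfolding measurable_distr_eq1 using measurable_cong_sets[OF sg refl] mb by blast
      show ?thesis by (rule nn_integral_distr[OF mT mf, symmetric])
    qed
    also have "\<dots> = (\<integral>\<^sup>+ x. ennreal (min (norm u) (norm (x - u))) \<partial>(gaussian_iso \<sigma> :: 'a measure))"
      unfolding comp u(2) ..
    also have "\<dots> \<le> ennreal (norm u + real DIM('a) * \<sigma>\<^sup>2 / (2 * norm u) - \<sigma> / sqrt (2*pi))"
      by (rule key[OF \<sigma>pos u(1)])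
    also have "\<dots> \<le> ennreal ((1 - 1 / (8 * pi * c)) * r + \<alpha>)"
    proof (intro ennreal_leI)
      have "r + real DIM('a) * \<sigma>\<^sup>2 / (2 * r) - \<sigma> / sqrt (2*pi) \<le> (1 - 1/(8*pi*c)) * r"
        by (rule arith_final[OF _ c(1) rpos s14 s12 \<sigma>s]) simp
      then show "norm u + real DIM('a) * \<sigma>\<^sup>2 / (2 * norm u) - \<sigma> / sqrt (2*pi) \<le> (1 - 1 / (8 * pi * c)) * r + \<alpha>"
        using a u(2) by simp
    qed
    finally show ?thesis unfolding F_def c_def r_def .
  qed
qed


end
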